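(* Let $1<q<\infty$ and let $M\in\mathcal C^2$ be an Orlicz function with $M(0)=0=M'(0)$ such that $\lim_{t\to0^+}M''(t)/t^{q-2}$ exists (in $\overline{\mathbb R}$) and there is a constant $C>0$ with \[ \int_0^s\frac{M(t)}{t^{q+1}}\,\mathrm dt\leq C\,\frac{M(s)}{s^q}\qquad\text{for all }0<s\leq M^{-1}(1). \] Then \[ \lim_{t\to0^+}\frac{M(t)}{t^q}=\lim_{t\to0^+}\frac{M'(t)}{t^{q-1}}=\lim_{t\to0^+}\frac{M''(t)}{t^{q-2}}=0. \]
   Context: An Orlicz function is a convex function $M:[0,\infty)\to[0,\infty)$ with $M(0)=0$ and $M(t)>0$ for $t>0$. *)

theory Defs
  imports "HOL-Analysis.Analysis" "HOL-Library.Extended_Real"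
begin

definition orlicz_function :: "(real \<Rightarrow> real) \<Rightarrow> bool" where
  "orlicz_function M \<longleftrightarrow> convex_on {0..} M \<and> M 0 = 0 \<and> (\<forall>t>0. M t > 0)"

end

theory Submission
  imports Defs
begin

lemma deriv_at:
  assumes "t > 0" "(f has_real_derivative D) (at t within {0..})"
  shows "(f has_real_derivative D) (at t)"
proof -
  have "(f has_real_derivative D) (at t within {0<..})"
    using assms(2) by (rule has_field_derivative_subset) auto
  moreover have e: "at t within {0<..} = at t"
    by (rule at_within_open) (use assms(1) in auto)
  ultimately show ?thesis by (simp only: e)
qed

lemma lower:
  fixes F F' :: "real \<Rightarrow> real"
  assumes "0 < r" "F 0 = 0" "continuous_on {0..} F"
    and "\<And>t. 0 < t \<Longrightarrow> (F has_real_derivative F' t) (at t)"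
    and "\<And>t. 0 < t \<Longrightarrow> t < \<delta> \<Longrightarrow> F' t \<ge> K * t powr (r - 1)"
    and "0 < t" "t < \<delta>"
  shows "F t \<ge> K / r * t powr r"
proof -
  define G where "G = (\<lambda>x. F x - K / r * x powr r)"
  have D: "\<exists>y. (G has_real_derivative y) (at x) \<and> 0 \<le> y" if x: "0 < x" "x < t" for x
  proof -
    have "(G has_real_derivative F' x - K / r * (r * x powr (r - 1))) (at x)"
    proof -
      have P: "((\<lambda>z. z powr r) has_real_derivative r * x powr (r - 1)) (at x)"
        using x(1) by (rule has_real_derivative_powr)
      show ?thesis unfolding G_def using x
        by (intro DERIV_diff DERIV_cmult P assms(4)) auto
    qed
    moreover have "F' x - K / r * (r * x powr (r - 1)) \<ge> 0"
    proof -
      have "x < \<delta>" using x assms(7) by linarith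
      hence "F' x \<ge> K * x powr (r - 1)" using assms(5) x(1) by blast
      moreover have "K / r * (r * x powr (r - 1)) = K * x powr (r - 1)" using assms(1) by simp
      ultimately show ?thesis by linarith
    qed
    ultimately show ?thesis by blast
  qed
  have C: "continuous_on {0..t} G"
  proof -
    have "continuous_on {0..t} F" using assms(3) by (rule continuous_on_subset) auto
    moreover have "continuous_on {0..t} (\<lambda>x::real. x powr r)"
      using assms(1) by (intro continuous_on_powr' continuous_intros) auto
    ultimately show "continuous_on {0..t} G" unfolding G_def by (intro continuous_on_diff continuous_on_mult continuous_on_const)
  qed
  have "0 \<le> t" using assms(6) by simp
  have "G 0 \<le> G t" by (rule DERIV_nonneg_imp_increasing_open[OF \<open>0 \<le> t\<close> D C])
  moreover have "G 0 = 0" unfolding G_def using assms(2) by simp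
  ultimately have "0 \<le> G t" by simp
  hence "0 \<le> F t - K / r * t powr r" unfolding G_def by simp
  thus ?thesis by (simp only: diff_ge_0_iff_ge)
qed

lemma to0:
  fixes h :: "real \<Rightarrow> real"
  assumes "\<And>\<epsilon>. \<epsilon> > 0 \<Longrightarrow> \<exists>\<delta>>0. \<forall>t. 0 < t \<longrightarrow> t < \<delta> \<longrightarrow> \<bar>h t\<bar> \<le> \<epsilon>"
  shows "(h \<longlongrightarrow> 0) (at_right 0)"
proof (rule tendstoI)
  fix e :: real assume "e > 0"
  then obtain d where d: "d > 0" "\<forall>t. 0 < t \<longrightarrow> t < d \<longrightarrow> \<bar>h t\<bar> \<le> e/2"
    using assms[of "e/2"] by auto
  show "\<forall>\<^sub>F x in at_right 0. dist (h x) 0 < e"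
    unfolding eventually_at_right_field
  proof (intro exI conjI allI impI)
    show "(0::real) < d" by (rule d(1))
    fix y :: real assume "0 < y" "y < d"
    then have "\<bar>h y\<bar> \<le> e/2" using d(2) by blast
    thus "dist (h y) 0 < e" using \<open>e > 0\<close> by simp
  qed
qed


lemma absbound:
  fixes F F' :: "real \<Rightarrow> real"
  assumes "0 < r" "F 0 = 0" "continuous_on {0..} F"
    and "\<And>t. 0 < t \<Longrightarrow> (F has_real_derivative F' t) (at t)"
    and "\<And>t. 0 < t \<Longrightarrow> t < \<delta> \<Longrightarrow> \<bar>F' t\<bar> \<le> K * t powr (r - 1)"
    and "0 < t" "t < \<delta>"
  shows "\<bar>F t\<bar> \<le> K / r * t powr r"
proof -
  have 1: "(- K) / r * t powr r \<le> F t"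
  proof (rule lower[of r F F' \<delta> "-K"])
    fix x :: real assume "0 < x" "x < \<delta>"
    thus "- K * x powr (r - 1) \<le> F' x" using assms(5)[of x] by linarith
  qed (use assms in auto)
  have 2: "(- K) / r * t powr r \<le> (\<lambda>x. - F x) t"
  proof (rule lower[of r "\<lambda>x. - F x" "\<lambda>x. - F' x" \<delta> "-K"])
    show "continuous_on {0..} (\<lambda>x. - F x)" using assms(3) by (rule continuous_on_minus)
    fix x :: real assume "0 < x"
    thus "((\<lambda>x. - F x) has_real_derivative - F' x) (at x)" using assms(4) by (intro DERIV_minus)
  next
    fix x :: real assume "0 < x" "x < \<delta>"
    thus "- K * x powr (r - 1) \<le> - F' x" using assms(5)[of x] by linarith
  qed (use assms in auto)
  have e: "(- K) / r * t powr r = - (K / r * t powr r)" by simp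
  show ?thesis using 1 2 unfolding e by simp
qed

theorem lemma3p2:
  fixes M M' M'' :: "real \<Rightarrow> real" and q C :: real
  assumes q: "1 < q"
    and orl: "orlicz_function M"
    and dM: "\<And>t. t \<ge> 0 \<Longrightarrow> (M has_real_derivative M' t) (at t within {0..})"
    and dM': "\<And>t. t \<ge> 0 \<Longrightarrow> (M' has_real_derivative M'' t) (at t within {0..})"
    and contM'': "continuous_on {0..} M''"
    and M'0: "M' 0 = 0"
    and lim2: "\<exists>L::ereal. ((\<lambda>t. ereal (M'' t / t powr (q - 2))) \<longlongrightarrow> L) (at_right 0)"
    and Cpos: "C > 0"
    and intcond: "\<And>s. 0 < s \<Longrightarrow> M s \<le> 1 \<Longrightarrow>
        (\<integral>\<^sup>+ t\<in>{0<..s}. ennreal (M t / t powr (q + 1)) \<partial>lborel) \<le> ennreal (C * M s / s powr q)"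
  shows "((\<lambda>t. M t / t powr q) \<longlongrightarrow> 0) (at_right 0)
       \<and> ((\<lambda>t. M' t / t powr (q - 1)) \<longlongrightarrow> 0) (at_right 0)
       \<and> ((\<lambda>t. M'' t / t powr (q - 2)) \<longlongrightarrow> 0) (at_right 0)"
proof -
  have M0: "M 0 = 0" and Mpos: "\<And>t. t > 0 \<Longrightarrow> M t > 0"
    using orl unfolding orlicz_function_def by auto
  have contM: "continuous_on {0..} M"
    unfolding continuous_on_eq_continuous_within
    using dM by (auto intro: DERIV_continuous)
  have contM': "continuous_on {0..} M'"
    unfolding continuous_on_eq_continuous_within
    using dM' by (auto intro: DERIV_continuous)
  have dMa: "\<And>t. 0 < t \<Longrightarrow> (M has_real_derivative M' t) (at t)"
    using dM deriv_at by force
  have dM'a: "\<And>t. 0 < t \<Longrightarrow> (M' has_real_derivative M'' t) (at t)"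
    using dM' deriv_at by force
  have pp: "\<And>(t::real) (r::real). 0 < t \<Longrightarrow> t powr r > 0" by simp
  define f where "f t = M'' t / t powr (q - 2)" for t
  obtain L where Lim: "((\<lambda>t. ereal (f t)) \<longlongrightarrow> L) (at_right 0)"
    using lim2 unfolding f_def by auto
  have "L = 0"
  proof (rule ccontr)
    assume "L \<noteq> 0"
    then consider "L < 0" | "L > 0" by (cases "L < 0") auto
    then show False
    proof cases
      case 1
      then obtain z where z: "L < ereal z" "ereal z < 0" using ereal_dense2 by blast
      have "\<forall>\<^sub>F t in at_right 0. ereal (f t) < ereal z" by (rule order_tendstoD(2)[OF Lim z(1)])
      then obtain d where d: "d > 0" "\<And>t. 0 < t \<Longrightarrow> t < d \<Longrightarrow> f t < z"
        unfolding eventually_at_right_field by auto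
      have neg: "M'' t < 0" if "0 < t" "t < d" for t
      proof -
        have "f t < 0" using d(2)[OF that] z(2) by simp
        thus ?thesis using pp[OF that(1), of "q - 2"] unfolding f_def by (simp add: divide_less_0_iff)
      qed
      have A: "\<And>t. 0 < t \<Longrightarrow> t < d \<Longrightarrow> 0 / 1 * t powr 1 \<le> (\<lambda>x. - M' x) t"
      proof (rule lower[of 1 "\<lambda>x. - M' x" "\<lambda>x. - M'' x" d 0])
        show "continuous_on {0..} (\<lambda>x. - M' x)" using contM' by (rule continuous_on_minus)
        fix x :: real assume "0 < x"
        thus "((\<lambda>x. - M' x) has_real_derivative - M'' x) (at x)" using dM'a by (intro DERIV_minus)
      next
        fix x :: real assume "0 < x" "x < d"
        thus "0 * x powr (1 - 1) \<le> - M'' x" using neg[of x] by simp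
      qed (use M'0 in auto)
      have B: "\<And>t. 0 < t \<Longrightarrow> t < d \<Longrightarrow> 0 / 1 * t powr 1 \<le> (\<lambda>x. - M x) t"
      proof (rule lower[of 1 "\<lambda>x. - M x" "\<lambda>x. - M' x" d 0])
        show "continuous_on {0..} (\<lambda>x. - M x)" using contM by (rule continuous_on_minus)
        fix x :: real assume "0 < x"
        thus "((\<lambda>x. - M x) has_real_derivative - M' x) (at x)" using dMa by (intro DERIV_minus)
      next
        fix x :: real assume "0 < x" "x < d"
        thus "0 * x powr (1 - 1) \<le> - M' x" using A[of x] by simp
      qed (use M0 in auto)
      have "0 \<le> - M (d/2)" using B[of "d/2"] d(1) by simp
      thus False using Mpos[of "d/2"] d(1) by simp
    next
      case 2
      then obtain z where z: "0 < ereal z" "ereal z < L" using ereal_dense2 by blast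
      have zpos: "z > 0" using z(1) by simp
      have "\<forall>\<^sub>F t in at_right 0. ereal z < ereal (f t)" by (rule order_tendstoD(1)[OF Lim z(2)])
      then obtain d where d: "d > 0" "\<And>t. 0 < t \<Longrightarrow> t < d \<Longrightarrow> z < f t"
        unfolding eventually_at_right_field by auto
      have pos: "z * t powr (q - 1 - 1) \<le> M'' t" if "0 < t" "t < d" for t
      proof -
        have "z < M'' t / t powr (q - 2)" using d(2)[OF that] unfolding f_def .
        hence "z * t powr (q - 2) < M'' t" using pp[OF that(1), of "q - 2"] by (simp add: less_divide_eq)
        moreover have "q - 1 - 1 = q - 2" by simp
        ultimately show ?thesis by simp
      qed
      have A: "\<And>t. 0 < t \<Longrightarrow> t < d \<Longrightarrow> z / (q - 1) * t powr (q - 1) \<le> M' t"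
        by (rule lower[of "q - 1" M' M'' d z]) (use q M'0 contM' dM'a pos in auto)
      have B: "\<And>t. 0 < t \<Longrightarrow> t < d \<Longrightarrow> z / (q - 1) / q * t powr q \<le> M t"
        by (rule lower[of q M M' d "z / (q - 1)"]) (use q M0 contM dMa A in auto)
      define c where "c = z / (q - 1) / q"
      have cpos: "c > 0" unfolding c_def using zpos q by simp
      have "(M \<longlongrightarrow> M 0) (at 0 within {0..})"
        using contM unfolding continuous_on_def by auto
      hence "(M \<longlongrightarrow> M 0) (at_right 0)" by (rule tendsto_within_subset) auto
      hence "\<forall>\<^sub>F t in at_right 0. M t < 1" using M0 by (intro order_tendstoD(2)) auto
      then obtain b where b: "b > 0" "\<And>t. 0 < t \<Longrightarrow> t < b \<Longrightarrow> M t < 1"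
        unfolding eventually_at_right_field by auto
      define s where "s = min b d / 2"
      have s: "0 < s" "s < b" "s < d" unfolding s_def using b(1) d(1) by auto
      define K where "K = C * M s / s powr q"
      have Kpos: "K > 0" unfolding K_def using Cpos Mpos[OF s(1)] pp[OF s(1)] by simp
      have I: "(\<integral>\<^sup>+ t\<in>{0<..s}. ennreal (M t / t powr (q + 1)) \<partial>lborel) \<le> ennreal K"
        unfolding K_def using intcond[OF s(1)] b(2)[OF s(1,2)] by simp
      define e where "e = s * exp (- (K / c + 1))"
      have e: "0 < e" "e \<le> s" unfolding e_def using s(1) divide_pos_pos[OF Kpos cpos]
        by (auto simp: mult_le_cancel_left1)
      have lne: "ln s - ln e = K / c + 1"
        unfolding e_def using s(1) by (simp add: ln_mult)
      have FTC: "(\<integral>\<^sup>+x. ennreal (c * (1 / x)) * indicator {e .. s} x \<partial>lborel) = ennreal (c * ln s - c * ln e)"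
      proof (rule nn_integral_FTC_Icc[where F = "\<lambda>x. c * ln x"])
        show "(\<lambda>x. c * (1 / x)) \<in> borel_measurable borel" by measurable
        fix x assume "x \<in> {e..s}"
        hence x: "x > 0" using e by auto
        show "((\<lambda>x. c * ln x) has_real_derivative c * (1 / x)) (at x)"
          by (intro DERIV_cmult DERIV_ln_divide x)
        show "0 \<le> c * (1 / x)" using x cpos by simp
      qed (use e in auto)
      have "c * ln s - c * ln e = K + c" using lne cpos by (simp add: right_diff_distrib[symmetric] field_simps)
      hence "ennreal (K + c) = (\<integral>\<^sup>+x. ennreal (c * (1 / x)) * indicator {e .. s} x \<partial>lborel)"
        using FTC by simp
      also have "\<dots> \<le> (\<integral>\<^sup>+ t\<in>{0<..s}. ennreal (M t / t powr (q + 1)) \<partial>lborel)"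
      proof (rule nn_integral_mono)
        fix x :: real
        show "ennreal (c * (1 / x)) * indicator {e..s} x \<le> ennreal (M x / x powr (q + 1)) * indicator {0<..s} x"
        proof (cases "x \<in> {e..s}")
          case True
          hence x: "0 < x" "x < d" using e s by auto
          have "c * x powr q \<le> M x" using B[OF x] unfolding c_def .
          hence "c * x powr q / (x powr q * x) \<le> M x / (x powr q * x)"
            using x(1) by (intro divide_right_mono) auto
          moreover have "c * x powr q / (x powr q * x) = c * (1 / x)" using x(1) by simp
          moreover have "x powr (q + 1) = x powr q * x" using x(1) by (simp add: powr_add)
          ultimately have "c * (1 / x) \<le> M x / x powr (q + 1)" by simp
          thus ?thesis using True e by (auto intro: ennreal_leI)
        qed simp
      qed
      also have "\<dots> \<le> ennreal K" by (rule I)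
      finally have "K + c \<le> K" using Kpos by (simp add: ennreal_le_iff)
      thus False using cpos by simp
    qed
  qed
  hence f0: "(f \<longlongrightarrow> 0) (at_right 0)" using Lim by (simp add: zero_ereal_def)
  have key: "\<exists>d>0. \<forall>t. 0 < t \<longrightarrow> t < d \<longrightarrow> \<bar>M' t\<bar> \<le> \<epsilon> / (q - 1) * t powr (q - 1)
                 \<and> \<bar>M t\<bar> \<le> \<epsilon> / (q - 1) / q * t powr q" if eps: "\<epsilon> > 0" for \<epsilon>
  proof -
    have "\<forall>\<^sub>F t in at_right 0. dist (f t) 0 < \<epsilon>" by (rule tendstoD[OF f0 eps])
    then obtain d where d: "d > 0" "\<And>t. 0 < t \<Longrightarrow> t < d \<Longrightarrow> \<bar>f t\<bar> < \<epsilon>"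
      unfolding eventually_at_right_field by auto
    have b2: "\<bar>M'' t\<bar> \<le> \<epsilon> * t powr (q - 1 - 1)" if "0 < t" "t < d" for t
    proof -
      have "\<bar>M'' t\<bar> / t powr (q - 2) < \<epsilon>" using d(2)[OF that] pp[OF that(1), of "q - 2"]
        unfolding f_def by (simp add: abs_divide)
      hence "\<bar>M'' t\<bar> < \<epsilon> * t powr (q - 2)" using pp[OF that(1), of "q - 2"] by (simp add: divide_less_eq)
      moreover have "q - 1 - 1 = q - 2" by simp
      ultimately show ?thesis by simp
    qed
    have b1: "\<bar>M' t\<bar> \<le> \<epsilon> / (q - 1) * t powr (q - 1)" if "0 < t" "t < d" for t
      by (rule absbound[of "q - 1" M' M'' d \<epsilon>]) (use q M'0 contM' dM'a b2 that in auto)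
    have b0: "\<bar>M t\<bar> \<le> \<epsilon> / (q - 1) / q * t powr q" if "0 < t" "t < d" for t
      by (rule absbound[of q M M' d "\<epsilon> / (q - 1)"]) (use q M0 contM dMa b1 that in auto)
    show ?thesis using d(1) b0 b1 by blast
  qed
  have c1: "((\<lambda>t. M t / t powr q) \<longlongrightarrow> 0) (at_right 0)"
  proof (rule to0)
    fix \<epsilon> :: real assume "\<epsilon> > 0"
    then obtain d where d: "d > 0" "\<And>t. 0 < t \<Longrightarrow> t < d \<Longrightarrow> \<bar>M t\<bar> \<le> \<epsilon> * (q - 1) * q / (q - 1) / q * t powr q"
      using key[of "\<epsilon> * (q - 1) * q"] q by auto
    have "\<bar>M t / t powr q\<bar> \<le> \<epsilon>" if "0 < t" "t < d" for t
    proof -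
      have "\<bar>M t\<bar> \<le> \<epsilon> * t powr q" using d(2)[OF that] q by simp
      thus ?thesis using pp[OF that(1), of q] by (simp add: abs_divide divide_le_eq)
    qed
    thus "\<exists>\<delta>>0. \<forall>t. 0 < t \<longrightarrow> t < \<delta> \<longrightarrow> \<bar>M t / t powr q\<bar> \<le> \<epsilon>" using d(1) by blast
  qed
  have c2: "((\<lambda>t. M' t / t powr (q - 1)) \<longlongrightarrow> 0) (at_right 0)"
  proof (rule to0)
    fix \<epsilon> :: real assume "\<epsilon> > 0"
    then obtain d where d: "d > 0" "\<And>t. 0 < t \<Longrightarrow> t < d \<Longrightarrow> \<bar>M' t\<bar> \<le> \<epsilon> * (q - 1) / (q - 1) * t powr (q - 1)"
      using key[of "\<epsilon> * (q - 1)"] q by auto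
    have "\<bar>M' t / t powr (q - 1)\<bar> \<le> \<epsilon>" if "0 < t" "t < d" for t
    proof -
      have "\<bar>M' t\<bar> \<le> \<epsilon> * t powr (q - 1)" using d(2)[OF that] q by simp
      thus ?thesis using pp[OF that(1), of "q - 1"] by (simp add: abs_divide divide_le_eq)
    qed
    thus "\<exists>\<delta>>0. \<forall>t. 0 < t \<longrightarrow> t < \<delta> \<longrightarrow> \<bar>M' t / t powr (q - 1)\<bar> \<le> \<epsilon>" using d(1) by blast
  qed
  show ?thesis using c1 c2 f0 unfolding f_def by blast
qed

end
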